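(* Let $\Gamma=(N,A,u)$ be a finite normal form game with $N=\{1,\dots,n\}$ and $n\ge3$, in which every player has the same strategy set $X$, so $A=X^n$. The following are equivalent: (i) $\Gamma$ is fully symmetric (i.e. $u_i=u_{\pi(i)}\circ\pi$ for all $i\in N$ and $\pi\in S_N$) and $u_i=u_j$ for all $i,j\in N$; (ii) for each $i\in N$ and $\pi\in S_N$, $u_i=u_{\pi(i)}\circ\pi^{-1}$.
   Context: For $\sigma\in S_N$ and $s\in A$ write $\sigma(s)=(s_{\sigma^{-1}(i)})_{i\in N}$, and for $f:A\to\mathbb{R}$, $f\circ\sigma$ denotes the map $s\mapsto f(\sigma(s))$. $u_i:A\to\mathbb{R}$ is the utility function of player $i$. *)

theory Defs
  imports Complex_Main "HOL-Combinatorics.Permutations"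
begin

text \<open>Players are the elements of a finite type 'n (so N = UNIV with |N| = CARD('n)),
  every player has the same finite strategy set, the finite type 'x, and a strategy
  profile is s :: 'n \<Rightarrow> 'x (so A = X^N).\<close>

definition perm_profile :: "('n \<Rightarrow> 'n) \<Rightarrow> ('n \<Rightarrow> 'x) \<Rightarrow> ('n \<Rightarrow> 'x)" where
  "perm_profile \<sigma> s = (\<lambda>i. s (inv \<sigma> i))"

definition fully_symmetric :: "('n \<Rightarrow> ('n \<Rightarrow> 'x) \<Rightarrow> real) \<Rightarrow> bool" where
  "fully_symmetric u \<longleftrightarrow>
     (\<forall>i \<pi>. \<pi> permutes (UNIV :: 'n set) \<longrightarrow>
        u i = (\<lambda>s. u (\<pi> i) (perm_profile \<pi> s)))"

end

theory Submission
  imports Defs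
begin

lemma pp_inv: "\<pi> permutes (UNIV::'n set) \<Longrightarrow> perm_profile (inv \<pi>) s = s \<circ> \<pi>"
  unfolding perm_profile_def by (auto simp: permutes_inv_inv o_def)

lemma pp_def2: "perm_profile \<pi> s = s \<circ> inv \<pi>"
  unfolding perm_profile_def by (simp add: o_def)

lemma transp_inv:
  fixes u :: "'n::finite \<Rightarrow> ('n \<Rightarrow> 'x) \<Rightarrow> real"
  assumes C: "\<And>i \<pi> s. \<pi> permutes (UNIV::'n set) \<Longrightarrow> u i s = u (\<pi> i) (s \<circ> \<pi>)"
    and card: "card (UNIV :: 'n set) \<ge> 3"
  shows "u i (s \<circ> Transposition.transpose a b) = u i s"
proof -
  have PT: "\<And>x y. Transposition.transpose x y permutes (UNIV::'n set)"
    by (simp add: permutes_swap_id)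
  have other: "\<And>x y t. i \<noteq> x \<Longrightarrow> i \<noteq> y \<Longrightarrow> u i (t \<circ> Transposition.transpose x y) = u i t"
    using C PT by (metis transpose_apply_other)
  have main: "\<And>b t. b \<noteq> i \<Longrightarrow> u i (t \<circ> Transposition.transpose i b) = u i t"
  proof -
    fix b t assume bi: "b \<noteq> i"
    obtain c where c: "c \<noteq> i" "c \<noteq> b"
    proof -
      have "card {i, b} \<le> 2" by (simp add: card_insert_le_m1)
      then have "{i,b} \<noteq> (UNIV::'n set)" using card by auto
      then show ?thesis using that by auto
    qed
    define p where "p = Transposition.transpose i b"
    define q where "q = Transposition.transpose b c"
    have pP: "p permutes (UNIV::'n set)" and qP: "q permutes (UNIV::'n set)"
      using PT p_def q_def by auto
    have s1: "\<And>x. u i (x \<circ> q) = u i x" using other c bi q_def by metis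
    have pb: "p b = i" and qi: "q i = i" using p_def q_def c bi by auto
    have R: "\<And>s. u i (s \<circ> p \<circ> q) = u i (s \<circ> q \<circ> p)"
    proof -
      fix s
      have "u b s = u i (s \<circ> p)" using C[OF pP, of b s] pb by simp
      also have "\<dots> = u i (s \<circ> p \<circ> q)" using C[OF qP, of i "s \<circ> p"] qi by simp
      finally have e1: "u b s = u i (s \<circ> p \<circ> q)" .
      have "u b s = u i (s \<circ> (q \<circ> p))"
        using C[OF permutes_compose[OF pP qP], of b s] pb qi by simp
      then show "u i (s \<circ> p \<circ> q) = u i (s \<circ> q \<circ> p)" using e1 by (simp add: o_assoc)
    qed
    have braid: "p \<circ> q \<circ> p \<circ> q = q \<circ> p"
      unfolding p_def q_def using c bi
      by (auto simp: fun_eq_iff transpose_def)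
    have s2: "\<And>y. u i (y \<circ> q \<circ> p) = u i y"
    proof -
      fix y
      have "u i (y \<circ> q \<circ> p) = u i (y \<circ> (p \<circ> q \<circ> p \<circ> q))" using braid by (simp add: o_assoc)
      also have "\<dots> = u i ((y \<circ> p \<circ> q) \<circ> p \<circ> q)" by (simp add: o_assoc)
      also have "\<dots> = u i ((y \<circ> p \<circ> q) \<circ> q \<circ> p)" using R by simp
      also have "\<dots> = u i y" unfolding p_def q_def by (simp add: comp_assoc)
      finally show "u i (y \<circ> q \<circ> p) = u i y" .
    qed
    have "u i (t \<circ> p) = u i ((t \<circ> q) \<circ> q \<circ> p)" unfolding q_def by (simp add: comp_assoc)
    also have "\<dots> = u i (t \<circ> q)" using s2 by simp
    also have "\<dots> = u i t" using s1 by simp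
    finally show "u i (t \<circ> Transposition.transpose i b) = u i t" using p_def by simp
  qed
  show ?thesis
  proof (cases "a = b")
    case True then show ?thesis by simp
  next
    case False
    show ?thesis
    proof (cases "i = a")
      case True then show ?thesis using main False by metis
    next
      case ia: False
      show ?thesis
      proof (cases "i = b")
        case True then show ?thesis using main ia transpose_commute by metis
      next
        case False then show ?thesis using other ia by metis
      qed
    qed
  qed
qed

lemma all_inv:
  fixes u :: "'n::finite \<Rightarrow> ('n \<Rightarrow> 'x) \<Rightarrow> real"
  assumes C: "\<And>i \<pi> s. \<pi> permutes (UNIV::'n set) \<Longrightarrow> u i s = u (\<pi> i) (s \<circ> \<pi>)"
    and card: "card (UNIV :: 'n set) \<ge> 3"
    and a: "\<alpha> permutes (UNIV::'n set)"
  shows "\<forall>s. u i (s \<circ> \<alpha>) = u i s"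
  using a finite_UNIV
proof (induction rule: permutes_induct)
  case id then show ?case by simp
next
  case (swap a b p)
  show ?case
  proof
    fix s
    have "u i (s \<circ> (Transposition.transpose a b \<circ> p)) = u i ((s \<circ> Transposition.transpose a b) \<circ> p)"
      by (simp add: o_assoc)
    also have "\<dots> = u i (s \<circ> Transposition.transpose a b)" using swap.IH by blast
    also have "\<dots> = u i s" by (rule transp_inv[OF C card])
    finally show "u i (s \<circ> (Transposition.transpose a b \<circ> p)) = u i s" .
  qed
qed

theorem theorem3p18:
  fixes u :: "'n::finite \<Rightarrow> ('n \<Rightarrow> 'x::finite) \<Rightarrow> real"
  assumes "card (UNIV :: 'n set) \<ge> 3"
  shows "(fully_symmetric u \<and> (\<forall>i j. u i = u j)) \<longleftrightarrow>
         (\<forall>i \<pi>. \<pi> permutes (UNIV :: 'n set) \<longrightarrow>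
            u i = (\<lambda>s. u (\<pi> i) (perm_profile (inv \<pi>) s)))"
proof
  assume h: "fully_symmetric u \<and> (\<forall>i j. u i = u j)"
  have FS: "\<And>i \<pi> s. \<pi> permutes (UNIV::'n set) \<Longrightarrow> u i s = u (\<pi> i) (s \<circ> inv \<pi>)"
    using h unfolding fully_symmetric_def pp_def2 by metis
  have eq: "\<And>i j. u i = u j" using h by blast
  have inv: "\<And>i \<alpha> s. \<alpha> permutes (UNIV::'n set) \<Longrightarrow> u i (s \<circ> \<alpha>) = u i s"
  proof -
    fix i \<alpha> s assume a: "\<alpha> permutes (UNIV::'n set)"
    have "u i s = u (inv \<alpha> i) (s \<circ> inv (inv \<alpha>))" using FS[OF permutes_inv[OF a]] .
    then show "u i (s \<circ> \<alpha>) = u i s" using eq permutes_inv_inv[OF a] by metis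
  qed
  show "\<forall>i \<pi>. \<pi> permutes (UNIV :: 'n set) \<longrightarrow>
            u i = (\<lambda>s. u (\<pi> i) (perm_profile (inv \<pi>) s))"
    using inv eq by (simp add: pp_inv fun_eq_iff)
next
  assume h: "\<forall>i \<pi>. \<pi> permutes (UNIV :: 'n set) \<longrightarrow>
            u i = (\<lambda>s. u (\<pi> i) (perm_profile (inv \<pi>) s))"
  have C: "\<And>i \<pi> s. \<pi> permutes (UNIV::'n set) \<Longrightarrow> u i s = u (\<pi> i) (s \<circ> \<pi>)"
    using h pp_inv by metis
  have inv: "\<And>i \<alpha> s. \<alpha> permutes (UNIV::'n set) \<Longrightarrow> u i (s \<circ> \<alpha>) = u i s"
    using all_inv[OF C assms] by blast
  have eq: "\<And>i j. u i = u j"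
  proof
    fix i j s
    have P: "Transposition.transpose i j permutes (UNIV::'n set)" by (simp add: permutes_swap_id)
    show "u i s = u j s" using C[OF P, of i s] inv[OF P] by simp
  qed
  have "fully_symmetric u"
    unfolding fully_symmetric_def pp_def2
    using eq inv permutes_inv by metis
  then show "fully_symmetric u \<and> (\<forall>i j. u i = u j)" using eq by blast
qed

end
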